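(* Fix an integer $m\ge 1$ and consider multiple-choice questions $x$ with $m$ answer options, drawn at random, each with a unique correct answer $y^\star\in\{1,\dots,m\}$. Let $C(x)\subseteq\{1,\dots,m\}$ be a (random) prediction set, let $\nu(x)=|C(x)|$, and let $\hat y'$ denote the final answer produced by the revision procedure (CROQ) described in the context, where a final answer can be correct only if $y^\star\in C(x)$ and $\nu(x)\ge 1$. Let $a=\Pr(\hat y=y^\star)$ be the accuracy of the original single-round answer $\hat y$, and for $k=1,\dots,m$ define $r_k=\Pr(\nu(x)=k)$, $\rho_k=\Pr(y^\star\in C(x)\mid \nu(x)=k)$ and $f_{\mathrm{post}}(k)=\Pr(\hat y'=y^\star\mid \nu(x)=k,\ y^\star\in C(x))$. Then: (1) The change in accuracy due to CROQ equals $$\Delta(f_{\mathrm{post}},\alpha,a):=\Pr(\hat y'=y^\star)-a=\sum_{k=1}^m r_k\rho_k f_{\mathrm{post}}(k)-a.$$ (2) A sufficient condition for $\Delta(f_{\mathrm{post}},\alpha,a)>0$ is that $r_k\rho_k>\dfrac{a}{m\,f_{\mathrm{post}}(k)}$ for all $1\le k\le m$. (3) Suppose the function $f_{\mathrm{post}}$ is held fixed and is monotonically decreasing in $k$. Then among all collections of pairs $\{(r_k,\rho_k)\}_{k=1}^m$ with $r_k\ge 0$, $\rho_k\in[0,1]$, $\sum_{k=1}^m r_k\le 1$ and $1-\alpha\le\sum_{k=1}^m r_k\rho_k\le 1$, the quantity $\sum_{k=1}^m r_k\rho_k f_{\mathrm{post}}(k)-a$ is maximized by the greedy choice that makes $r_1\rho_1$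 as large as possible, then $r_2\rho_2$ as large as possible given that, and so on; in particular the maximizer satisfies $r_1\rho_1\ge r_2\rho_2\ge\cdots\ge r_m\rho_m$.
   Context: Setting (conformal revision of questions, CROQ): an LLM answers a multiple-choice question $x$ with $m$ options; its standard answer $\hat y$ is the option with the highest softmax score over the option-key tokens. A conformal prediction set $C(x)=\{y: g(x,y)\ge\hat\tau_\alpha\}$ is computed from a score function $g$ and a threshold $\hat\tau_\alpha$ calibrated by split conformal prediction at miscoverage level $\alpha\in[0,1]$, so that $\Pr(y^\star\in C(x))\ge 1-\alpha$. CROQ then rewrites the question keeping only the options in $C(x)$ (relabelled) and takes the LLM's answer $\hat y'$ to the revised question; thus the final answer is an element of $C(x)$ and is correct only when $y^\star\in C(x)$ (empty sets never yield a correct answer). The parameter $\alpha$ enters only through the constraint $\sum_k r_k\rho_k\ge 1-\alpha$ on the coverage. *)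

theory Defs
  imports "HOL-Probability.Probability"
begin

text \<open>Elementary conditional probability Pr(A | B) = Pr(A \<inter> B) / Pr(B)
  (with the Isabelle convention x / 0 = 0 when Pr(B) = 0).\<close>
definition cprob :: "'a measure \<Rightarrow> 'a set \<Rightarrow> 'a set \<Rightarrow> real" where
  "cprob M A B = measure M (A \<inter> B) / measure M B"

definition croq_r :: "'a measure \<Rightarrow> ('a \<Rightarrow> nat set) \<Rightarrow> nat \<Rightarrow> real" where
  "croq_r M C k = measure M {\<omega> \<in> space M. card (C \<omega>) = k}"

definition croq_rho :: "'a measure \<Rightarrow> ('a \<Rightarrow> nat set) \<Rightarrow> ('a \<Rightarrow> nat) \<Rightarrow> nat \<Rightarrow> real" where
  "croq_rho M C ystar k =
     cprob M {\<omega> \<in> space M. ystar \<omega> \<in> C \<omega>} {\<omega> \<in> space M. card (C \<omega>) = k}"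

definition croq_fpost ::
  "'a measure \<Rightarrow> ('a \<Rightarrow> nat set) \<Rightarrow> ('a \<Rightarrow> nat) \<Rightarrow> ('a \<Rightarrow> nat) \<Rightarrow> nat \<Rightarrow> real" where
  "croq_fpost M C ystar yfin k =
     cprob M {\<omega> \<in> space M. yfin \<omega> = ystar \<omega>}
             {\<omega> \<in> space M. card (C \<omega>) = k \<and> ystar \<omega> \<in> C \<omega>}"

definition croq_acc :: "'a measure \<Rightarrow> ('a \<Rightarrow> nat) \<Rightarrow> ('a \<Rightarrow> nat) \<Rightarrow> real" where
  "croq_acc M ystar yhat = measure M {\<omega> \<in> space M. yhat \<omega> = ystar \<omega>}"

definition croq_feasible :: "nat \<Rightarrow> real \<Rightarrow> (nat \<Rightarrow> real) \<Rightarrow> (nat \<Rightarrow> real) \<Rightarrow> bool" where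
  "croq_feasible m \<alpha> r \<rho> \<longleftrightarrow>
     (\<forall>k\<in>{1..m}. 0 \<le> r k \<and> 0 \<le> \<rho> k \<and> \<rho> k \<le> 1) \<and>
     (\<Sum>k=1..m. r k) \<le> 1 \<and>
     1 - \<alpha> \<le> (\<Sum>k=1..m. r k * \<rho> k) \<and> (\<Sum>k=1..m. r k * \<rho> k) \<le> 1"

definition croq_greedy :: "nat \<Rightarrow> real \<Rightarrow> (nat \<Rightarrow> real) \<Rightarrow> (nat \<Rightarrow> real) \<Rightarrow> bool" where
  "croq_greedy m \<alpha> r \<rho> \<longleftrightarrow>
     croq_feasible m \<alpha> r \<rho> \<and>
     (\<forall>k\<in>{1..m}. \<forall>r' \<rho>'. croq_feasible m \<alpha> r' \<rho>' \<and>
         (\<forall>j\<in>{1..<k}. r' j * \<rho>' j = r j * \<rho> j) \<longrightarrow> r' k * \<rho>' k \<le> r k * \<rho> k)"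

end

theory Submission
  imports Defs
begin


lemma mult_cprob_eq:
  assumes "prob_space M" "A \<in> sets M" "X \<subseteq> A"
  shows "measure M A * (measure M X / measure M A) = measure M X"
proof (cases "measure M A = 0")
  case True
  interpret prob_space M by fact
  have "measure M X \<le> measure M A" using assms by (intro finite_measure_mono) auto
  moreover have "measure M X \<ge> 0" by simp
  ultimately show ?thesis using True by simp
qed simp

lemma feas_prod:
  assumes "croq_feasible m \<alpha> r \<rho>" "k \<in> {1..m}"
  shows "0 \<le> r k * \<rho> k" "r k * \<rho> k \<le> r k"
  using assms unfolding croq_feasible_def
  by (auto intro!: mult_nonneg_nonneg mult_left_le)

lemma feas_sum:
  assumes "croq_feasible m \<alpha> r \<rho>"
  shows "(\<Sum>k=1..m. r k * \<rho> k) \<le> 1"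
  using assms unfolding croq_feasible_def by auto

lemma feas_witness:
  assumes "m \<ge> 1" "0 \<le> \<alpha>"
  shows "croq_feasible m \<alpha> (\<lambda>k. if k = 1 then 1 else 0) (\<lambda>k. 1)"
proof -
  have s: "(\<Sum>k=1..m. (if k = 1 then 1 else 0::real)) = 1"
    using assms by (simp add: sum.delta)
  show ?thesis unfolding croq_feasible_def using s assms by simp
qed

lemma greedy_shape:
  assumes "m \<ge> 1" "0 \<le> \<alpha>" "croq_greedy m \<alpha> r \<rho>"
  shows "r 1 * \<rho> 1 = 1" "\<And>k. k \<in> {2..m} \<Longrightarrow> r k * \<rho> k = 0"
proof -
  have F: "croq_feasible m \<alpha> r \<rho>" using assms(3) unfolding croq_greedy_def by auto
  have "1 * 1 \<le> r 1 * \<rho> 1"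
  proof -
    have "\<forall>r' \<rho>'. croq_feasible m \<alpha> r' \<rho>' \<and>
         (\<forall>j\<in>{1..<1}. r' j * \<rho>' j = r j * \<rho> j) \<longrightarrow> r' 1 * \<rho>' 1 \<le> r 1 * \<rho> 1"
      using assms(3) assms(1) unfolding croq_greedy_def by auto
    from spec[OF spec[OF this, of "\<lambda>k. if k = 1 then 1 else 0"], of "\<lambda>k. 1"]
    show ?thesis using feas_witness[OF assms(1,2)] by simp
  qed
  hence ge: "1 \<le> r 1 * \<rho> 1" by simp
  have split: "(\<Sum>k=1..m. r k * \<rho> k) = r 1 * \<rho> 1 + (\<Sum>k=2..m. r k * \<rho> k)"
    using assms(1) by (simp add: sum.atLeast_Suc_atMost numeral_2_eq_2)
  have nn: "\<And>k. k \<in> {2..m} \<Longrightarrow> 0 \<le> r k * \<rho> k" using feas_prod(1)[OF F] by auto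
  have s0: "0 \<le> (\<Sum>k=2..m. r k * \<rho> k)" using nn by (intro sum_nonneg) auto
  have le1: "(\<Sum>k=1..m. r k * \<rho> k) \<le> 1" using feas_sum[OF F] .
  show "r 1 * \<rho> 1 = 1" using ge s0 le1 split by linarith
  have z: "(\<Sum>k=2..m. r k * \<rho> k) = 0" using ge s0 le1 split by linarith
  fix k assume "k \<in> {2..m}"
  thus "r k * \<rho> k = 0" using sum_nonneg_eq_0_iff[of "{2..m}" "\<lambda>k. r k * \<rho> k"] z nn by auto
qed

theorem proposition2:
  fixes M :: "'a measure" and m :: nat and \<alpha> :: real
    and ystar yhat yfin :: "'a \<Rightarrow> nat" and C :: "'a \<Rightarrow> nat set"
  assumes "prob_space M"
    and "m \<ge> 1"
    and "0 \<le> \<alpha>" and "\<alpha> \<le> 1"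
    and "ystar \<in> measurable M (count_space UNIV)"
    and "yhat \<in> measurable M (count_space UNIV)"
    and "yfin \<in> measurable M (count_space UNIV)"
    and "C \<in> measurable M (count_space UNIV)"
    and "\<forall>\<omega>\<in>space M. ystar \<omega> \<in> {1..m}"
    and "\<forall>\<omega>\<in>space M. C \<omega> \<subseteq> {1..m}"
    and "\<forall>\<omega>\<in>space M. yfin \<omega> = ystar \<omega> \<longrightarrow> ystar \<omega> \<in> C \<omega> \<and> card (C \<omega>) \<ge> 1"
  shows
    \<comment> \<open>(1)\<close>
    "measure M {\<omega> \<in> space M. yfin \<omega> = ystar \<omega>} - croq_acc M ystar yhat =
       (\<Sum>k=1..m. croq_r M C k * croq_rho M C ystar k * croq_fpost M C ystar yfin k)
         - croq_acc M ystar yhat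
     \<comment> \<open>(2)\<close>
     \<and> ((\<forall>k\<in>{1..m}. 0 < croq_fpost M C ystar yfin k \<and>
            croq_acc M ystar yhat / (real m * croq_fpost M C ystar yfin k)
              < croq_r M C k * croq_rho M C ystar k)
         \<longrightarrow> measure M {\<omega> \<in> space M. yfin \<omega> = ystar \<omega>} - croq_acc M ystar yhat > 0)
     \<comment> \<open>(3)\<close>
     \<and> ((\<forall>i\<in>{1..m}. \<forall>j\<in>{1..m}. i \<le> j \<longrightarrow>
            croq_fpost M C ystar yfin j \<le> croq_fpost M C ystar yfin i)
         \<longrightarrow> (\<exists>r \<rho>. croq_greedy m \<alpha> r \<rho>)
           \<and> (\<forall>r \<rho>. croq_greedy m \<alpha> r \<rho> \<longrightarrow>
                (\<forall>r' \<rho>'. croq_feasible m \<alpha> r' \<rho>' \<longrightarrow>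
                   (\<Sum>k=1..m. r' k * \<rho>' k * croq_fpost M C ystar yfin k) - croq_acc M ystar yhat
                   \<le> (\<Sum>k=1..m. r k * \<rho> k * croq_fpost M C ystar yfin k) - croq_acc M ystar yhat)
                \<and> (\<forall>k\<in>{1..<m}. r (k+1) * \<rho> (k+1) \<le> r k * \<rho> k)))"
proof -
  interpret P: prob_space M by fact
  let ?f = "croq_fpost M C ystar yfin"
  let ?a = "croq_acc M ystar yhat"
  let ?Y = "{\<omega> \<in> space M. yfin \<omega> = ystar \<omega>}"
  define J where "J k = {\<omega> \<in> space M. card (C \<omega>) = k \<and> ystar \<omega> \<in> C \<omega>}" for k
  have pre: "{\<omega> \<in> space M. P (g \<omega>)} \<in> sets M"
    if "g \<in> measurable M (count_space UNIV)" for P and g :: "'a \<Rightarrow> 'b"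
  proof -
    have "g -` {x. P x} \<inter> space M \<in> sets M" by (rule measurable_sets[OF that]) simp
    moreover have "g -` {x. P x} \<inter> space M = {\<omega> \<in> space M. P (g \<omega>)}" by auto
    ultimately show ?thesis by simp
  qed
  have Ysets: "?Y \<in> sets M"
  proof -
    have "?Y = (\<Union>j\<in>{1..m}. {\<omega> \<in> space M. yfin \<omega> = j} \<inter> {\<omega> \<in> space M. ystar \<omega> = j})"
    proof (rule set_eqI, rule iffI)
      fix \<omega> assume w: "\<omega> \<in> ?Y"
      hence "ystar \<omega> \<in> {1..m}" using assms(9) by blast
      thus "\<omega> \<in> (\<Union>j\<in>{1..m}. {\<omega> \<in> space M. yfin \<omega> = j} \<inter> {\<omega> \<in> space M. ystar \<omega> = j})"
        using w by blast
    qed auto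
    also have "\<dots> \<in> sets M" by (intro sets.finite_UN finite_atLeastAtMost sets.Int pre[OF assms(7)] pre[OF assms(5)])
    finally show ?thesis .
  qed
  have Isets: "{\<omega> \<in> space M. ystar \<omega> \<in> C \<omega>} \<in> sets M"
  proof -
    have "{\<omega> \<in> space M. ystar \<omega> \<in> C \<omega>} = (\<Union>j\<in>{1..m}. {\<omega> \<in> space M. j \<in> C \<omega>} \<inter> {\<omega> \<in> space M. ystar \<omega> = j})"
    proof (rule set_eqI, rule iffI)
      fix \<omega> assume w: "\<omega> \<in> {\<omega> \<in> space M. ystar \<omega> \<in> C \<omega>}"
      hence "ystar \<omega> \<in> {1..m}" using assms(9) by blast
      thus "\<omega> \<in> (\<Union>j\<in>{1..m}. {\<omega> \<in> space M. j \<in> C \<omega>} \<inter> {\<omega> \<in> space M. ystar \<omega> = j})"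
        using w by blast
    qed auto
    also have "\<dots> \<in> sets M" by (intro sets.finite_UN finite_atLeastAtMost sets.Int pre[OF assms(8)] pre[OF assms(5)])
    finally show ?thesis .
  qed
  have Ksets: "{\<omega> \<in> space M. card (C \<omega>) = k} \<in> sets M" for k by (rule pre[OF assms(8)])
  have Jsets: "J k \<in> sets M" for k
  proof -
    have "J k = {\<omega> \<in> space M. ystar \<omega> \<in> C \<omega>} \<inter> {\<omega> \<in> space M. card (C \<omega>) = k}"
      unfolding J_def by auto
    thus ?thesis using Isets Ksets by auto
  qed
  have termeq: "croq_r M C k * croq_rho M C ystar k * ?f k = measure M (?Y \<inter> J k)" for k
  proof -
    have e: "{\<omega> \<in> space M. ystar \<omega> \<in> C \<omega>} \<inter> {\<omega> \<in> space M. card (C \<omega>) = k} = J k"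
      unfolding J_def by auto
    have "croq_r M C k * croq_rho M C ystar k = measure M (J k)"
      unfolding croq_r_def croq_rho_def cprob_def e
      by (rule mult_cprob_eq[OF assms(1) Ksets]) (auto simp: J_def)
    moreover have "measure M (J k) * ?f k = measure M (?Y \<inter> J k)"
      unfolding croq_fpost_def cprob_def J_def[symmetric]
      by (rule mult_cprob_eq[OF assms(1) Jsets]) auto
    ultimately show ?thesis by simp
  qed
  have U: "?Y = (\<Union>k\<in>{1..m}. ?Y \<inter> J k)"
  proof (rule set_eqI, rule iffI)
    fix \<omega> assume w: "\<omega> \<in> ?Y"
    hence sp: "\<omega> \<in> space M" and c: "ystar \<omega> \<in> C \<omega>" "card (C \<omega>) \<ge> 1" using assms(11) by auto
    have "card (C \<omega>) \<le> card {1..m}" using assms(10) sp by (intro card_mono) auto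
    hence "card (C \<omega>) \<le> m" by simp
    thus "\<omega> \<in> (\<Union>k\<in>{1..m}. ?Y \<inter> J k)" using w c sp unfolding J_def by auto
  qed auto
  have P1: "measure M ?Y = (\<Sum>k=1..m. croq_r M C k * croq_rho M C ystar k * ?f k)"
  proof -
    have "measure M ?Y = measure M (\<Union>k\<in>{1..m}. ?Y \<inter> J k)" using U by simp
    also have "\<dots> = (\<Sum>k=1..m. measure M (?Y \<inter> J k))"
      using Ysets Jsets by (intro P.finite_measure_finite_Union) (auto simp: disjoint_family_on_def J_def)
    finally show ?thesis using termeq by simp
  qed
  have P2: "measure M ?Y - ?a > 0"
    if h: "\<forall>k\<in>{1..m}. 0 < ?f k \<and> ?a / (real m * ?f k) < croq_r M C k * croq_rho M C ystar k"
  proof -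
    have "?a / real m < croq_r M C k * croq_rho M C ystar k * ?f k" if k: "k \<in> {1..m}" for k
    proof -
      have fp: "0 < ?f k" and lt: "?a / (real m * ?f k) < croq_r M C k * croq_rho M C ystar k"
        using h k by auto
      have "?a / real m = ?a / (real m * ?f k) * ?f k" using fp by simp
      also have "\<dots> < croq_r M C k * croq_rho M C ystar k * ?f k"
        using lt fp by (intro mult_strict_right_mono) auto
      finally show ?thesis .
    qed
    hence "(\<Sum>k=1..m. ?a / real m) < (\<Sum>k=1..m. croq_r M C k * croq_rho M C ystar k * ?f k)"
      using assms(2) by (intro sum_strict_mono) auto
    moreover have "(\<Sum>k=1..m. ?a / real m) = ?a" using assms(2) by simp
    ultimately show ?thesis using P1 by simp
  qed
  have P3: "(\<exists>r \<rho>. croq_greedy m \<alpha> r \<rho>)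
           \<and> (\<forall>r \<rho>. croq_greedy m \<alpha> r \<rho> \<longrightarrow>
                (\<forall>r' \<rho>'. croq_feasible m \<alpha> r' \<rho>' \<longrightarrow>
                   (\<Sum>k=1..m. r' k * \<rho>' k * ?f k) - ?a
                   \<le> (\<Sum>k=1..m. r k * \<rho> k * ?f k) - ?a)
                \<and> (\<forall>k\<in>{1..<m}. r (k+1) * \<rho> (k+1) \<le> r k * \<rho> k))"
    if mono: "\<forall>i\<in>{1..m}. \<forall>j\<in>{1..m}. i \<le> j \<longrightarrow> ?f j \<le> ?f i"
  proof (intro conjI allI impI)
    let ?r0 = "\<lambda>k. if k = 1 then 1 else (0::real)"
    let ?p0 = "\<lambda>k::nat. (1::real)"
    have F0: "croq_feasible m \<alpha> ?r0 ?p0" using feas_witness[OF assms(2,3)] .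
    have "croq_greedy m \<alpha> ?r0 ?p0"
      unfolding croq_greedy_def
    proof (intro conjI F0 ballI allI impI)
      fix k r' \<rho>' assume k: "k \<in> {1..m}" and h: "croq_feasible m \<alpha> r' \<rho>' \<and>
         (\<forall>j\<in>{1..<k}. r' j * \<rho>' j = ?r0 j * ?p0 j)"
      show "r' k * \<rho>' k \<le> ?r0 k * ?p0 k"
      proof (cases "k = 1")
        case True
        have "r' k * \<rho>' k \<le> (\<Sum>k=1..m. r' k * \<rho>' k)"
          using k feas_prod(1)[of m \<alpha> r' \<rho>'] h by (intro member_le_sum) auto
        thus ?thesis using feas_sum[of m \<alpha> r' \<rho>'] h True by simp
      next
        case False
        hence k2: "k \<in> {2..m}" using k by auto
        have one: "r' 1 * \<rho>' 1 = 1" using h k2 by auto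
        have split: "(\<Sum>k=1..m. r' k * \<rho>' k) = r' 1 * \<rho>' 1 + (\<Sum>k=2..m. r' k * \<rho>' k)"
          using assms(2) by (simp add: sum.atLeast_Suc_atMost numeral_2_eq_2)
        have "r' k * \<rho>' k \<le> (\<Sum>k=2..m. r' k * \<rho>' k)"
          using k2 feas_prod(1)[of m \<alpha> r' \<rho>'] h by (intro member_le_sum) auto
        thus ?thesis using feas_sum[of m \<alpha> r' \<rho>'] h False split one by simp
      qed
    qed
    thus "\<exists>r \<rho>. croq_greedy m \<alpha> r \<rho>" by blast
  next
    fix r \<rho> r' \<rho>' assume G: "croq_greedy m \<alpha> r \<rho>" and F: "croq_feasible m \<alpha> r' \<rho>'"
    have one: "r 1 * \<rho> 1 = 1" and z: "\<And>k. k \<in> {2..m} \<Longrightarrow> r k * \<rho> k = 0"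
      using greedy_shape[OF assms(2,3) G] by auto
    have split: "(\<Sum>k=1..m. r k * \<rho> k * ?f k) = r 1 * \<rho> 1 * ?f 1 + (\<Sum>k=2..m. r k * \<rho> k * ?f k)"
      using assms(2) by (simp add: sum.atLeast_Suc_atMost numeral_2_eq_2)
    have rhs: "(\<Sum>k=1..m. r k * \<rho> k * ?f k) = ?f 1"
      using split one z by simp
    have f1: "0 \<le> ?f 1" unfolding croq_fpost_def cprob_def by simp
    have "(\<Sum>k=1..m. r' k * \<rho>' k * ?f k) \<le> (\<Sum>k=1..m. r' k * \<rho>' k * ?f 1)"
      using mono assms(2) feas_prod(1)[OF F] by (intro sum_mono mult_left_mono) auto
    also have "\<dots> = (\<Sum>k=1..m. r' k * \<rho>' k) * ?f 1" by (simp add: sum_distrib_right)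
    also have "\<dots> \<le> 1 * ?f 1" using feas_sum[OF F] f1 by (intro mult_right_mono) auto
    finally show "(\<Sum>k=1..m. r' k * \<rho>' k * ?f k) - ?a \<le> (\<Sum>k=1..m. r k * \<rho> k * ?f k) - ?a"
      using rhs by simp
  next
    fix r \<rho> assume G: "croq_greedy m \<alpha> r \<rho>"
    have F: "croq_feasible m \<alpha> r \<rho>" using G unfolding croq_greedy_def by auto
    have z: "\<And>k. k \<in> {2..m} \<Longrightarrow> r k * \<rho> k = 0"
      using greedy_shape[OF assms(2,3) G] by auto
    show "\<forall>k\<in>{1..<m}. r (k+1) * \<rho> (k+1) \<le> r k * \<rho> k"
    proof
      fix k assume k: "k \<in> {1..<m}"
      have "r (k+1) * \<rho> (k+1) = 0" using z k by auto
      moreover have "0 \<le> r k * \<rho> k" using feas_prod(1)[OF F] k by auto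
      ultimately show "r (k+1) * \<rho> (k+1) \<le> r k * \<rho> k" by (simp only:)
    qed
  qed
  show ?thesis using P1 P2 P3 by simp
qed

end
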